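(* Let $r\geq1$ be odd, $m\geq 3$, $n=(r+1)m$, let $u$ be an integer with $\gcd(u,2^m-1)=1$, let $\alpha$ be a primitive element of $\mathbb{F}_{2^{rm}}$, and let $0\leq s,l\leq 2^{rm}-2$ be integers. For $0\le k\le 2^{rm}-2$ let $\Delta_k=\{\alpha^i\mid k\leq i\leq k+2^{rm-1}-1\}$. Let $F\colon\mathbb{F}_{2^{rm}}\times\mathbb{F}_{2^m}\to\mathbb{F}_2$ be the Boolean function with $$\mathrm{supp}(F)=\{(\gamma y^u,y)\mid y\in\mathbb{F}_{2^m}^*,\ \gamma\in\Delta_s\}\cup\{(\gamma,0)\mid\gamma\in\Delta_l\}.$$ Then the bivariate representation of $F$ over $\mathbb{F}_{2^{rm}}\times\mathbb{F}_{2^m}$ is $$F(x,y)=\sum_{\substack{i=1\\(2^m-1)\nmid i}}^{2^{rm}-2}\alpha^{-is}(1+\alpha^{-i})^{2^{rm-1}-1}x^iy^{2^m-1-\overline{ui}}+\sum_{j=1}^{\frac{2^{rm}-1}{2^m-1}-1}\alpha^{-(2^m-1)js}\bigl(1+\alpha^{-(2^m-1)j}\bigr)^{2^{rm-1}-1}x^{(2^m-1)j}y^{2^m-1}$$ $$\qquad+\sum_{i=1}^{2^{rm}-2}\alpha^{-il}(1+\alpha^{-i})^{2^{rm-1}-1}x^i(1+y^{2^m-1}),$$ where $\overline{ui}$ denotes the reduction of $ui$ modulo $2^m-1$ in $\{0,1,\dots,2^m-2\}$. Consequently $\deg F=n-1$.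
   Context: $\mathbb{F}_{2^{rm}}\times\mathbb{F}_{2^m}$ is viewed as an $n$-dimensional $\mathbb{F}_2$-vector space ($\mathbb{F}_{2^m}\subseteq\mathbb{F}_{2^{rm}}$). The bivariate representation of a Boolean function on $\mathbb{F}_{2^{rm}}\times\mathbb{F}_{2^m}$ is the unique polynomial $\sum_{i=0}^{2^{rm}-1}\sum_{j=0}^{2^m-1}c_{i,j}x^iy^j$ with $c_{i,j}\in\mathbb{F}_{2^{rm}}$ agreeing with the function everywhere. $\deg F$ is the algebraic degree of $F$ (degree of its algebraic normal form in $n$ binary coordinates). *)

theory Defs
  imports Main
begin

text \<open>The subfield F_(2^m) of a finite field 'a of order 2^(r m): the fixed points of y -> y^(2^m).\<close>
definition subfield_K :: "nat \<Rightarrow> 'a::field set" where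
  "subfield_K m = {y. y ^ (2 ^ m) = y}"

definition is_bivariate_rep :: "nat \<Rightarrow> nat \<Rightarrow> ('a \<times> 'a \<Rightarrow> 'a) \<Rightarrow> (nat \<Rightarrow> nat \<Rightarrow> 'a::field) \<Rightarrow> bool" where
  "is_bivariate_rep r m F c \<longleftrightarrow>
     (\<forall>i j. (2 ^ (r * m) \<le> i \<or> 2 ^ m \<le> j) \<longrightarrow> c i j = 0) \<and>
     (\<forall>x y. y \<in> subfield_K m \<longrightarrow>
        F (x, y) = (\<Sum>i<2 ^ (r * m). \<Sum>j<2 ^ m. c i j * x ^ i * y ^ j))"

definition bivariate_rep :: "nat \<Rightarrow> nat \<Rightarrow> ('a \<times> 'a \<Rightarrow> 'a) \<Rightarrow> (nat \<Rightarrow> nat \<Rightarrow> 'a::field)" where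
  "bivariate_rep r m F = (THE c. is_bivariate_rep r m F c)"

text \<open>Binary coordinates: the point with coordinate vector the indicator of T, w.r.t. the
  vectors b 0, b 1, ...\<close>
definition F2_coords :: "(nat \<Rightarrow> 'a::comm_monoid_add \<times> 'a) \<Rightarrow> nat set \<Rightarrow> 'a \<times> 'a" where
  "F2_coords b T = ((\<Sum>t\<in>T. fst (b t)), (\<Sum>t\<in>T. snd (b t)))"

definition is_F2_basis :: "nat \<Rightarrow> ('a::comm_monoid_add \<times> 'a) set \<Rightarrow> (nat \<Rightarrow> 'a \<times> 'a) \<Rightarrow> bool" where
  "is_F2_basis n D b \<longleftrightarrow> bij_betw (F2_coords b) (Pow {..<n}) D"

text \<open>ANF coefficient of the monomial prod_{i in S} x_i (Moebius transform over F_2).\<close>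
definition anf_coeff :: "(nat \<Rightarrow> 'a::comm_monoid_add \<times> 'a) \<Rightarrow> ('a \<times> 'a \<Rightarrow> bool) \<Rightarrow> nat set \<Rightarrow> bool" where
  "anf_coeff b F S \<longleftrightarrow> odd (card {T. T \<subseteq> S \<and> F (F2_coords b T)})"

definition alg_degree :: "nat \<Rightarrow> (nat \<Rightarrow> 'a::comm_monoid_add \<times> 'a) \<Rightarrow> ('a \<times> 'a \<Rightarrow> bool) \<Rightarrow> nat" where
  "alg_degree n b F = Max (insert 0 {card S | S. S \<subseteq> {..<n} \<and> anf_coeff b F S})"

definition Delta_set :: "nat \<Rightarrow> nat \<Rightarrow> 'a::field \<Rightarrow> nat \<Rightarrow> 'a set" where
  "Delta_set r m \<alpha> k = {\<alpha> ^ i | i. k \<le> i \<and> i \<le> k + 2 ^ (r * m - 1) - 1}"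

end

theory Submission
  imports Defs "HOL-Number_Theory.Residues" "HOL-Computational_Algebra.Polynomial" begin
lemma char2:
  assumes "card (UNIV::'a::{field,finite} set) = 2^k" "k > 0"
  shows "(2::'a) = 0"
proof -
  have d: "CHAR('a) dvd 2^k" using CHAR_dvd_CARD[where 'a='a] assms by simp
  have p: "prime CHAR('a)" by (rule prime_CHAR_semidom, rule finite_imp_CHAR_pos) simp
  have "CHAR('a) dvd 2" using prime_dvd_power[OF p d] .
  hence "CHAR('a) = 2" using p
    using dvd_imp_le[of "CHAR('a)" 2] prime_ge_2_nat[of "CHAR('a)"] by simp
  hence "of_nat 2 = (0::'a)" using of_nat_CHAR[where 'a='a] by simp
  thus ?thesis by simp
qed

lemma char2_add: "(2::'a::field) = 0 \<Longrightarrow> (x::'a) + x = 0"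
  by (metis mult_2 mult_zero_left)

lemma char2_minus: "(2::'a::field) = 0 \<Longrightarrow> - (x::'a) = x"
  by (metis add_eq_0_iff2 char2_add)

lemma char2_even: "(2::'a::field) = 0 \<Longrightarrow> even n \<Longrightarrow> (of_nat n::'a) = 0"
  by (auto elim!: evenE)

lemma frob: "(2::'a::field) = 0 \<Longrightarrow> ((a::'a) + b)^(2^e) = a^(2^e) + b^(2^e)"
proof (induction e)
  case 0 then show ?case by simp
next
  case (Suc e)
  have "(a+b)^(2^Suc e) = ((a+b)^(2^e))^2" by (simp add: power_mult[symmetric] mult.commute)
  also have "\<dots> = (a^(2^e) + b^(2^e))^2" using Suc by simp
  also have "\<dots> = (a^(2^e))^2 + (b^(2^e))^2 + 2 * a^(2^e) * b^(2^e)" by (simp add: power2_eq_square algebra_simps)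
  also have "\<dots> = a^(2^Suc e) + b^(2^Suc e)" using Suc.prems by (simp add: power_mult[symmetric] mult.commute)
  finally show ?case .
qed

lemma binom_geo:
  assumes c2: "(2::'a::field) = 0" and e: "e > 0"
  shows "(1 + (b::'a))^(2^e - 1) = (\<Sum>t<2^e. b^t)"
proof (cases "b = 1")
  case True
  have "(1 + b) = 0" using True c2 by simp
  moreover have "2^e - 1 > (0::nat)" using power_increasing[of 1 e "2::nat"] e by simp
  ultimately have l: "(1 + b)^(2^e - 1) = 0" by simp
  have "(\<Sum>t<2^e. b^t) = of_nat (2^e)" using True by simp
  also have "\<dots> = (2::'a)^e" by simp
  also have "\<dots> = 0" using c2 e by simp
  finally show ?thesis using l by simp
next
  case False
  have nz: "1 + b \<noteq> 0" using False c2 char2_minus[OF c2, of b]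
    by (metis add_eq_0_iff2)
  have "(1+b) * (1+b)^(2^e - 1) = (1+b)^(2^e)"
    by (metis One_nat_def Suc_pred pos2 power_Suc zero_less_power)
  also have "\<dots> = 1 + b^(2^e)" by (simp only: frob[OF c2, of 1 b e] power_one)
  also have "\<dots> = (1+b) * (\<Sum>t<2^e. b^t)"
  proof -
    have m1: "1 - b = 1 + b" by (simp only: diff_conv_add_uminus char2_minus[OF c2])
    have m2: "1 - b^(2^e) = 1 + b^(2^e)" by (simp only: diff_conv_add_uminus char2_minus[OF c2])
    show ?thesis using one_diff_power_eq[of b "2^e"] unfolding m1 m2 .
  qed
  finally show ?thesis using nz by simp
qed

lemma pow_mod_eq:
  fixes a :: "'a::field"
  assumes "a^od = 1"
  shows "a^i = a^(i mod od)"
proof -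
  have "a^i = a^(od * (i div od) + i mod od)" by simp
  also have "\<dots> = (a^od)^(i div od) * a^(i mod od)" by (simp only: power_add power_mult)
  finally show ?thesis using assms by simp
qed

lemma prim_facts:
  fixes \<alpha> :: "'a::{field,finite}"
  assumes gen: "\<forall>x::'a. x \<noteq> 0 \<longrightarrow> (\<exists>i::nat. x = \<alpha>^i)"
    and q: "card (UNIV::'a set) = q" and q3: "q \<ge> 3"
  shows "\<alpha> \<noteq> 0 \<and> (\<forall>i. \<alpha>^i = 1 \<longleftrightarrow> (q-1) dvd i)"
proof -
  have a0: "\<alpha> \<noteq> 0"
  proof
    assume "\<alpha> = 0"
    hence "UNIV \<subseteq> {0, 1::'a}" using gen by (auto simp: zero_power)
    hence "card (UNIV::'a set) \<le> card {0,1::'a}" by (intro card_mono) auto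
    also have "\<dots> \<le> 2" by (simp add: card_insert_le_m1)
    finally show False using q q3 by simp
  qed
  have "\<not> inj_on (\<lambda>i. \<alpha>^i) {..q}"
  proof (rule pigeonhole)
    have "card ((\<lambda>i. \<alpha>^i) ` {..q}) \<le> card (UNIV::'a set)" by (intro card_mono) auto
    thus "card ((\<lambda>i. \<alpha>^i) ` {..q}) < card {..q}" using q by simp
  qed
  then obtain i j where ij: "i < j" "\<alpha>^i = \<alpha>^j"
    unfolding inj_on_def by (metis linorder_neqE_nat)
  have "\<alpha>^j = \<alpha>^i * \<alpha>^(j-i)" using ij(1) by (simp add: power_add[symmetric])
  hence ex: "\<alpha>^(j-i) = 1" using ij a0 by simp
  define od where "od = (LEAST od. 0 < od \<and> \<alpha>^od = 1)"
  have od: "0 < od \<and> \<alpha>^od = 1" unfolding od_def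
    by (rule LeastI[of _ "j-i"]) (use ij ex in auto)
  have omin: "\<alpha>^k \<noteq> 1" if "0 < k" "k < od" for k
    using that not_less_Least od_def by blast
  have dv: "\<alpha>^k = 1 \<longleftrightarrow> od dvd k" for k
  proof
    assume "\<alpha>^k = 1"
    hence "\<alpha>^(k mod od) = 1" using pow_mod_eq[of \<alpha> od k] od by simp
    hence "k mod od = 0" using omin[of "k mod od"] od by (meson mod_less_divisor neq0_conv)
    thus "od dvd k" by auto
  next
    assume "od dvd k" thus "\<alpha>^k = 1" using od by (auto simp: power_mult)
  qed
  have inj: "inj_on (\<lambda>i. \<alpha>^i) {..<od}"
  proof (rule inj_onI)
    fix a b assume ab: "a \<in> {..<od}" "b \<in> {..<od}" "\<alpha>^a = \<alpha>^b"
    show "a = b"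
    proof (rule ccontr)
      assume "a \<noteq> b"
      then consider "a < b" | "b < a" by linarith
      thus False
      proof cases
        case 1
        have "\<alpha>^b = \<alpha>^a * \<alpha>^(b-a)" using 1 by (simp add: power_add[symmetric])
        hence "\<alpha>^(b-a) = 1" using ab a0 by simp
        thus False using omin[of "b-a"] 1 ab by (simp add: less_imp_diff_less)
      next
        case 2
        have "\<alpha>^a = \<alpha>^b * \<alpha>^(a-b)" using 2 by (simp add: power_add[symmetric])
        hence "\<alpha>^(a-b) = 1" using ab a0 by simp
        thus False using omin[of "a-b"] 2 ab by (simp add: less_imp_diff_less)
      qed
    qed
  qed
  have sub1: "(\<lambda>i. \<alpha>^i) ` {..<od} \<subseteq> UNIV - {0}" using a0 by auto
  have c1: "card (UNIV - {0::'a}) = q - 1" using q by (simp add: card_Diff_singleton)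
  have "od \<le> q - 1" using card_mono[OF _ sub1] card_image[OF inj] c1 by simp
  moreover have "UNIV - {0} \<subseteq> (\<lambda>i. \<alpha>^i) ` {..<od}"
  proof
    fix x :: 'a assume "x \<in> UNIV - {0}"
    then obtain i where "x = \<alpha>^i" using gen by auto
    hence "x = \<alpha>^(i mod od)" using pow_mod_eq[of \<alpha> od i] od by simp
    thus "x \<in> (\<lambda>i. \<alpha>^i) ` {..<od}" using od by auto
  qed
  hence "q - 1 \<le> od" using card_mono[of "(\<lambda>i. \<alpha>^i) ` {..<od}" "UNIV - {0}"] card_image[OF inj] c1 by simp
  ultimately have "od = q - 1" by simp
  thus ?thesis using a0 dv by simp
qed


lemma nat_pow_dvd: "(x::nat) \<ge> 1 \<Longrightarrow> (x - 1) dvd (x^k - 1)"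
proof -
  assume x: "x \<ge> 1"
  have "int x ^ k - 1 = (int x - 1) * (\<Sum>i<k. int x ^ i)" by (rule power_diff_1_eq)
  hence "(int x - 1) dvd (int x ^ k - 1)" by simp
  moreover have e1: "int (x - 1) = int x - 1" using x by simp
  moreover have e2: "int (x^k - 1) = int x ^ k - 1" using x by (simp add: of_nat_diff)
  ultimately have "int (x - 1) dvd int (x^k - 1)" by (simp only: e1 e2)
  thus ?thesis by (simp only: int_dvd_int_iff)
qed


lemma poly_zero_coeffs:
  fixes a :: "nat \<Rightarrow> 'a::field"
  assumes fin: "finite R" and cR: "card R \<ge> n" and z: "\<forall>x\<in>R. (\<Sum>i<n. a i * x^i) = 0" and i: "i < n"
  shows "a i = 0"
proof -
  define p where "p = (\<Sum>i<n. monom (a i) i)"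
  have ev: "poly p x = (\<Sum>i<n. a i * x^i)" for x unfolding p_def by (simp add: poly_sum poly_monom)
  have co: "coeff p j = (if j < n then a j else 0)" for j
    unfolding p_def by (simp add: coeff_sum coeff_monom)
  have "p = 0"
  proof (rule ccontr)
    assume p0: "p \<noteq> 0"
    have d1: "degree p \<le> n - 1" by (rule degree_le) (use co in auto)
    have d2: "card {x. poly p x = 0} \<le> degree p" by (rule card_poly_roots_bound[OF p0])
    have d3: "R \<subseteq> {x. poly p x = 0}" using z ev by auto
    have d4: "finite {x. poly p x = 0}" using poly_roots_finite[OF p0] .
    have "card R \<le> card {x. poly p x = 0}" by (rule card_mono[OF d4 d3])
    hence "card R \<le> n - 1" using d1 d2 by linarith
    thus False using cR i by simp
  qed
  hence "coeff p i = 0" by simp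
  thus ?thesis using co i by simp
qed

lemma powi_mod:
  fixes z :: "'a::field"
  assumes zL: "z ^ L = 1" and L: "L > 0"
  shows "z powi a = z ^ nat (a mod int L)"
proof -
  have z0: "z \<noteq> 0" using zL L by (cases "z = 0") (auto simp: zero_power)
  have "a = int L * (a div int L) + a mod int L" by simp
  hence "z powi a = z powi (int L * (a div int L) + a mod int L)" by (rule arg_cong)
  also have "\<dots> = z powi (int L * (a div int L)) * z powi (a mod int L)"
    by (rule power_int_add) (use z0 in auto)
  also have "z powi (int L * (a div int L)) = 1"
    by (simp add: power_int_mult zL)
  also have "z powi (a mod int L) = z ^ nat (a mod int L)"
  proof -
    have "a mod int L = int (nat (a mod int L))" using L by simp
    hence "z powi (a mod int L) = z powi int (nat (a mod int L))" by (rule arg_cong)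
    thus ?thesis by (simp only: power_int_of_nat)
  qed
  finally show ?thesis by simp
qed


lemma sum_if_one:
  assumes "j0 < (n::nat)" "\<And>j. j < n \<Longrightarrow> P j = (P' \<and> j = j0)"
  shows "(\<Sum>j<n. (if P j then a else 0) * b j) = (if P' then a * b j0 else (0::'a::field))"
proof -
  have "(\<Sum>j<n. (if P j then a else 0) * b j) = (\<Sum>j<n. if j = j0 then (if P' then a * b j0 else 0) else 0)"
    by (rule sum.cong) (use assms in auto)
  also have "\<dots> = (if P' then a * b j0 else 0)" using assms(1) by (subst sum.delta) auto
  finally show ?thesis .
qed

lemma sum_if_two:
  assumes "j0 < (n::nat)" "j1 < n" "j0 \<noteq> j1" "\<And>j. j < n \<Longrightarrow> P j = (P' \<and> (j = j0 \<or> j = j1))"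
  shows "(\<Sum>j<n. (if P j then a else 0) * b j) = (if P' then a * (b j0 + b j1) else (0::'a::field))"
proof -
  have "(\<Sum>j<n. (if P j then a else 0) * b j) = (\<Sum>j<n. (if j = j0 then (if P' then a * b j0 else 0) else 0)
        + (if j = j1 then (if P' then a * b j1 else 0) else 0))"
    by (rule sum.cong) (use assms in auto)
  also have "\<dots> = (\<Sum>j<n. (if j = j0 then (if P' then a * b j0 else 0) else 0))
        + (\<Sum>j<n. (if j = j1 then (if P' then a * b j1 else 0) else 0))"
    by (rule sum.distrib)
  also have "\<dots> = (if P' then a * b j0 else 0) + (if P' then a * b j1 else 0)"
    using assms(1,2) by (subst sum.delta, simp, subst sum.delta, simp) simp
  also have "\<dots> = (if P' then a * (b j0 + b j1) else 0)" by (simp add: algebra_simps)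
  finally show ?thesis .
qed

locale fsetup =
  fixes r m :: nat and \<alpha> :: "'a::{field,finite}"
  assumes r1: "r \<ge> 1" and m3: "m \<ge> 3"
    and card: "card (UNIV::'a set) = 2^(r*m)"
    and gen: "\<forall>x::'a. x \<noteq> 0 \<longrightarrow> (\<exists>i::nat. x = \<alpha>^i)"
begin

abbreviation "q \<equiv> (2::nat)^(r*m)"
abbreviation "Q \<equiv> (2::nat)^m"
abbreviation "N \<equiv> (2::nat)^(r*m-1)"
abbreviation "M \<equiv> q - 1"
definition "d = M div (Q - 1)"
definition "\<beta> = \<alpha> ^ d"

lemma rm3: "r * m \<ge> 3"
proof -
  have "m \<le> r * m" using r1 by (cases r) auto
  thus ?thesis using m3 by linarith
qed

lemma Q8: "Q \<ge> 8"
  using power_increasing[of 3 m "2::nat"] m3 by simp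

lemma q8: "q \<ge> 8"
  using power_increasing[of 3 "r*m" "2::nat"] rm3 by simp

lemma N_even: "even N" using rm3 by simp

lemma qN: "q = 2 * N"
proof -
  have e: "Suc (r*m-1) = r*m" using rm3 by simp
  have "(2::nat)^(r*m) = 2^(Suc (r*m-1))" by (simp only: e)
  also have "\<dots> = 2 * N" by simp
  finally show ?thesis .
qed

lemma c2: "(2::'a) = 0" using char2[OF card] r1 m3 by simp

lemma a0: "\<alpha> \<noteq> 0" and ord: "\<alpha>^i = 1 \<longleftrightarrow> M dvd i"
  using prim_facts[OF gen card] q8 by auto

lemma pow_eq_1: "(x::'a) \<noteq> 0 \<Longrightarrow> x ^ M = 1"
proof -
  assume "x \<noteq> 0"
  then obtain i where "x = \<alpha>^i" using gen by auto
  hence "x^M = (\<alpha>^M)^i" by (simp add: power_mult[symmetric] mult.commute)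
  thus ?thesis using ord[of M] by simp
qed

lemma inj_window: "inj_on (\<lambda>t. \<alpha>^t) {k..<k+M}"
proof (rule inj_onI)
  fix a b assume ab: "a \<in> {k..<k+M}" "b \<in> {k..<k+M}" "\<alpha>^a = \<alpha>^b"
  show "a = b"
  proof (rule ccontr)
    assume "a \<noteq> b"
    then consider "a < b" | "b < a" by linarith
    thus False
    proof cases
      case 1
      have "\<alpha>^b = \<alpha>^a * \<alpha>^(b-a)" using 1 by (simp add: power_add[symmetric])
      hence "\<alpha>^(b-a) = 1" using ab a0 by simp
      hence "M dvd (b-a)" using ord by simp
      moreover have "0 < b - a" "b - a < M" using 1 ab by auto
      ultimately show False using nat_dvd_not_less by blast
    next
      case 2
      have "\<alpha>^a = \<alpha>^b * \<alpha>^(a-b)" using 2 by (simp add: power_add[symmetric])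
      hence "\<alpha>^(a-b) = 1" using ab a0 by simp
      hence "M dvd (a-b)" using ord by simp
      moreover have "0 < a - b" "a - b < M" using 2 ab by auto
      ultimately show False using nat_dvd_not_less by blast
    qed
  qed
qed

lemma QM: "(Q - 1) dvd M"
proof -
  have "(Q - 1) dvd (Q^r - 1)" by (rule nat_pow_dvd) simp
  thus ?thesis by (simp add: power_mult[symmetric] mult.commute)
qed

lemma Md: "M = (Q - 1) * d" unfolding d_def using QM by simp

lemma d0: "d > 0" using Md q8 by (cases "d = 0") auto

lemma beta_ord: "\<beta>^k = 1 \<longleftrightarrow> (Q-1) dvd k"
proof -
  have "\<beta>^k = \<alpha>^(d*k)" unfolding \<beta>_def by (simp add: power_mult)
  also have "\<dots> = 1 \<longleftrightarrow> (Q - 1) * d dvd d * k" using ord Md by simp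
  also have "\<dots> \<longleftrightarrow> (Q-1) dvd k" using d0 by (simp add: mult.commute)
  finally show ?thesis .
qed

lemma beta0: "\<beta> \<noteq> 0" unfolding \<beta>_def using a0 by simp

lemma beta_inj: "inj_on (\<lambda>k. \<beta>^k) {..<Q-1}"
proof (rule inj_onI)
  fix a b assume ab: "a \<in> {..<Q-1}" "b \<in> {..<Q-1}" "\<beta>^a = \<beta>^b"
  have "\<alpha>^(d*a) = \<alpha>^(d*b)" using ab(3) unfolding \<beta>_def by (simp add: power_mult)
  moreover have "d*a \<in> {0..<0+M}" "d*b \<in> {0..<0+M}" using ab(1,2) Md d0 by auto
  ultimately have "d*a = d*b" using inj_window[of 0] unfolding inj_on_def by blast
  thus "a = b" using d0 by simp
qed

lemma K_nz: "(y::'a) \<in> subfield_K m \<Longrightarrow> y \<noteq> 0 \<Longrightarrow> y^(Q-1) = 1"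
proof -
  assume y: "y \<in> subfield_K m" "y \<noteq> 0"
  have QS: "Q = Suc (Q-1)" using Q8 by simp
  have "y * y^(Q-1) = y^Q" by (subst (2) QS) (simp only: power_Suc)
  also have "\<dots> = y" using y unfolding subfield_K_def by simp
  finally show ?thesis using y by simp
qed

lemma Kstar: "subfield_K m - {0} = (\<lambda>k. \<beta>^k) ` {..<Q-1}"
proof
  show "subfield_K m - {0} \<subseteq> (\<lambda>k. \<beta>^k) ` {..<Q-1}"
  proof
    fix y :: 'a assume y: "y \<in> subfield_K m - {0}"
    then obtain i where i: "y = \<alpha>^i" using gen by auto
    have "\<alpha>^(i*(Q-1)) = 1" using K_nz[of y] y i by (simp add: power_mult)
    hence "(Q-1)*d dvd (Q-1) * i" using ord Md by (simp add: mult.commute)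
    hence "d dvd i" using Q8 by simp
    then obtain k where k: "i = d * k" by auto
    have "y = \<beta>^k" unfolding \<beta>_def using i k by (simp add: power_mult)
    also have "\<dots> = \<beta>^(k mod (Q-1))" using pow_mod_eq[of \<beta> "Q-1" k] beta_ord[of "Q-1"] by simp
    finally show "y \<in> (\<lambda>k. \<beta>^k) ` {..<Q-1}" using Q8 by auto
  qed
next
  show "(\<lambda>k. \<beta>^k) ` {..<Q-1} \<subseteq> subfield_K m - {0}"
  proof
    fix y :: 'a assume "y \<in> (\<lambda>k. \<beta>^k) ` {..<Q-1}"
    then obtain k where k: "y = \<beta>^k" by auto
    have QS: "Q = Suc (Q-1)" using Q8 by simp
    have "y^Q = y * y^(Q-1)" by (subst QS) (simp only: power_Suc)
    also have "\<dots> = y * (\<beta>^(Q-1))^k" using k by (simp add: power_mult[symmetric] mult.commute)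
    finally have "y^Q = y * (\<beta>^(Q-1))^k" .
    also have "\<dots> = y" using beta_ord[of "Q-1"] by simp
    finally show "y \<in> subfield_K m - {0}" using k beta0 unfolding subfield_K_def by simp
  qed
qed

lemma zero_K: "(0::'a) \<in> subfield_K m" unfolding subfield_K_def by simp

lemma card_Kstar: "card (subfield_K m - {0::'a}) = Q - 1"
proof -
  have "card ((\<lambda>k. \<beta>^k) ` {..<Q-1}) = card {..<Q-1}" by (rule card_image[OF beta_inj])
  thus ?thesis unfolding Kstar by simp
qed

lemma card_K: "card (subfield_K m :: 'a set) = Q"
proof -
  have eq: "(subfield_K m :: 'a set) = insert 0 (subfield_K m - {0})" using zero_K by auto
  have "card (subfield_K m :: 'a set) = card (insert (0::'a) (subfield_K m - {0}))"
    by (subst eq) (rule refl)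
  also have "\<dots> = Suc (card (subfield_K m - {0::'a}))" by (rule card_insert_disjoint) auto
  finally show ?thesis using card_Kstar Q8 by simp
qed

definition Acoef :: "nat \<Rightarrow> nat \<Rightarrow> 'a" where
  "Acoef t i = (inverse \<alpha>)^(i*t) * (1 + (inverse \<alpha>)^i)^(N - 1)"

lemma N0: "N > 0" by simp

lemma NM: "N \<le> M" using qN N0 by simp

lemma Delta_eq: "Delta_set r m \<alpha> k = (\<lambda>t. \<alpha>^t) ` {k..<k+N}"
proof -
  have g: "\<And>i n. n > 0 \<Longrightarrow> (k \<le> i \<and> i \<le> k + n - 1) = (i \<in> {k..<k+n})" by auto
  have "\<And>i. (k \<le> i \<and> i \<le> k + N - 1) = (i \<in> {k..<k+N})" by (rule g[OF N0])
  thus ?thesis unfolding Delta_set_def by (auto simp: image_def)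
qed

lemma Delta_inj: "inj_on (\<lambda>t. \<alpha>^t) {k..<k+N}"
  by (rule inj_on_subset[OF inj_window[of k]]) (use NM q8 in auto)

lemma card_Delta: "card (Delta_set r m \<alpha> k) = N"
  unfolding Delta_eq using card_image[OF Delta_inj[of k]] by simp

lemma zero_notin_Delta: "(0::'a) \<notin> Delta_set r m \<alpha> k"
  unfolding Delta_eq using a0 by auto

lemma sum_shift: "(\<Sum>t\<in>{k..<k+n}. g t) = (\<Sum>t<n. g (k+t))" for k n :: nat
  by (rule sum.reindex_bij_witness[of _ "\<lambda>t. k + t" "\<lambda>t. t - k"]) auto

lemma A_sum: "Acoef k i = (\<Sum>t\<in>{k..<k+N}. (inverse (\<alpha>^t))^i)"
proof -
  have e: "r*m - 1 > 0" using rm3 by simp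
  have "Acoef k i = (inverse \<alpha>)^(i*k) * (\<Sum>t<N. ((inverse \<alpha>)^i)^t)"
    unfolding Acoef_def using binom_geo[OF c2 e, of "(inverse \<alpha>)^i"] by simp
  also have "\<dots> = (\<Sum>t<N. (inverse \<alpha>)^(i*k) * ((inverse \<alpha>)^i)^t)"
    by (simp add: sum_distrib_left)
  also have "\<dots> = (\<Sum>t<N. (inverse (\<alpha>^(k+t)))^i)"
  proof (rule sum.cong[OF refl])
    fix t
    have "(inverse \<alpha>)^(i*k) * ((inverse \<alpha>)^i)^t = (inverse \<alpha>)^(i*k + i*t)"
      by (simp add: power_add power_mult)
    also have "\<dots> = (inverse (\<alpha>^(k+t)))^i"
      by (simp add: power_inverse[symmetric] power_mult[symmetric] algebra_simps)
    finally show "(inverse \<alpha>)^(i*k) * ((inverse \<alpha>)^i)^t = (inverse (\<alpha>^(k+t)))^i" .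
  qed
  also have "\<dots> = (\<Sum>t\<in>{k..<k+N}. (inverse (\<alpha>^t))^i)"
    by (rule sum_shift[symmetric])
  finally show ?thesis .
qed

lemma geo:
  assumes z: "(z::'a) \<noteq> 0"
  shows "(\<Sum>i\<in>{1..q-2}. z^i) = (if z = 1 then 0 else 1)"
proof (cases "z = 1")
  case True
  have "(\<Sum>i\<in>{1..q-2}. z^i) = of_nat (q-2)" using True by simp
  also have "\<dots> = 0" by (rule char2_even[OF c2]) (use qN in simp)
  finally show ?thesis using True by simp
next
  case False
  have "(1 - z) * (\<Sum>i<M. z^i) = 1 - z^M" by (rule one_diff_power_eq[symmetric])
  also have "\<dots> = 0" using pow_eq_1[OF z] by simp
  finally have s0: "(\<Sum>i<M. z^i) = 0" using False by simp
  have MS: "M = Suc (q-2)" using q8 by simp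
  have "(\<Sum>i<M. z^i) = (\<Sum>i\<in>{0..q-2}. z^i)" unfolding MS lessThan_Suc_atMost atLeast0AtMost ..
  also have "\<dots> = 1 + (\<Sum>i\<in>{1..q-2}. z^i)" by (subst sum.atLeast_Suc_atMost) auto
  finally have "1 + (\<Sum>i\<in>{1..q-2}. z^i) = 0" using s0 by simp
  hence "(\<Sum>i\<in>{1..q-2}. z^i) = - 1" by (simp add: add_eq_0_iff)
  also have "\<dots> = 1" by (rule char2_minus[OF c2])
  finally show ?thesis using False by simp
qed

lemma ind_poly:
  "(if x \<in> Delta_set r m \<alpha> k then 1 else 0) = (\<Sum>i\<in>{1..q-2}. Acoef k i * x^i)"
proof -
  let ?T = "{k..<k+N}"
  have "(\<Sum>i\<in>{1..q-2}. Acoef k i * x^i) = (\<Sum>i\<in>{1..q-2}. \<Sum>t\<in>?T. (x * inverse (\<alpha>^t))^i)"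
    unfolding A_sum by (simp add: sum_distrib_right sum_distrib_left power_mult_distrib mult.commute)
  also have "\<dots> = (\<Sum>t\<in>?T. \<Sum>i\<in>{1..q-2}. (x * inverse (\<alpha>^t))^i)"
    by (rule sum.swap)
  finally have R: "(\<Sum>i\<in>{1..q-2}. Acoef k i * x^i) = (\<Sum>t\<in>?T. \<Sum>i\<in>{1..q-2}. (x * inverse (\<alpha>^t))^i)" .
  show ?thesis
  proof (cases "x = 0")
    case True
    have "(\<Sum>t\<in>?T. \<Sum>i\<in>{1..q-2}. (x * inverse (\<alpha>^t))^i) = 0"
      using True by (intro sum.neutral ballI) auto
    thus ?thesis using R True zero_notin_Delta by simp
  next
    case False
    have "(\<Sum>t\<in>?T. \<Sum>i\<in>{1..q-2}. (x * inverse (\<alpha>^t))^i)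
        = (\<Sum>t\<in>?T. 1 + (if \<alpha>^t = x then 1 else 0))"
    proof (rule sum.cong[OF refl])
      fix t
      have nz: "\<alpha>^t \<noteq> 0" using a0 by simp
      have "x * inverse (\<alpha>^t) \<noteq> 0" using False nz by simp
      hence "(\<Sum>i\<in>{1..q-2}. (x * inverse (\<alpha>^t))^i) = (if x * inverse (\<alpha>^t) = 1 then 0 else 1)"
        by (rule geo)
      also have "(x * inverse (\<alpha>^t) = 1) = (\<alpha>^t = x)" using nz by (auto simp: field_simps)
      finally show "(\<Sum>i\<in>{1..q-2}. (x * inverse (\<alpha>^t))^i) = 1 + (if \<alpha>^t = x then 1 else 0)"
        using char2_add[OF c2, of 1] by simp
    qed
    also have "\<dots> = of_nat N + (\<Sum>t\<in>?T. (if \<alpha>^t = x then 1 else 0))"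
      by (simp add: sum.distrib)
    also have "of_nat N = (0::'a)" by (rule char2_even[OF c2 N_even])
    also have "(\<Sum>t\<in>?T. (if \<alpha>^t = x then 1 else 0)) = (\<Sum>y\<in>(\<lambda>t. \<alpha>^t) ` ?T. (if y = x then 1 else (0::'a)))"
      by (rule sum.reindex[OF Delta_inj, symmetric, unfolded comp_def])
    also have "\<dots> = (if x \<in> (\<lambda>t. \<alpha>^t) ` ?T then 1 else 0)"
      by (simp add: sum.delta)
    finally show ?thesis using R unfolding Delta_eq by simp
  qed
qed

lemma rep_unique:
  fixes F :: "'a \<times> 'a \<Rightarrow> 'a"
  assumes c1: "is_bivariate_rep r m F c1" and c2': "is_bivariate_rep r m F c2"
  shows "c1 = c2"
proof (intro ext)
  fix i j
  show "c1 i j = c2 i j"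
  proof (cases "q \<le> i \<or> Q \<le> j")
    case True thus ?thesis using c1 c2' unfolding is_bivariate_rep_def by metis
  next
    case False
    hence ij: "i < q" "j < Q" by auto
    define dd where "dd = (\<lambda>i j. c1 i j - c2 i j)"
    have z: "(\<Sum>i<q. \<Sum>j<Q. dd i j * x^i * y^j) = 0" if y: "y \<in> subfield_K m" for x y
    proof -
      have "F (x,y) = (\<Sum>i<q. \<Sum>j<Q. c1 i j * x^i * y^j)" "F (x,y) = (\<Sum>i<q. \<Sum>j<Q. c2 i j * x^i * y^j)"
        using c1 c2' y unfolding is_bivariate_rep_def by auto
      hence "(\<Sum>i<q. \<Sum>j<Q. c1 i j * x^i * y^j) - (\<Sum>i<q. \<Sum>j<Q. c2 i j * x^i * y^j) = 0" by simp
      thus ?thesis unfolding dd_def by (simp add: sum_subtractf[symmetric] algebra_simps)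
    qed
    have z2: "(\<Sum>j<Q. dd i' j * y^j) = 0" if y: "y \<in> subfield_K m" and i': "i' < q" for y i'
    proof (rule poly_zero_coeffs[where R=UNIV and n=q and a="\<lambda>i. \<Sum>j<Q. dd i j * y^j"])
      show "finite (UNIV::'a set)" by simp
      show "q \<le> card (UNIV::'a set)" using card by simp
      show "i' < q" by (rule i')
      show "\<forall>x\<in>UNIV. (\<Sum>i<q. (\<Sum>j<Q. dd i j * y^j) * x^i) = 0"
      proof
        fix x :: 'a
        have "(\<Sum>i<q. (\<Sum>j<Q. dd i j * y^j) * x^i) = (\<Sum>i<q. \<Sum>j<Q. dd i j * x^i * y^j)"
          by (simp add: sum_distrib_right sum_distrib_left algebra_simps)
        thus "(\<Sum>i<q. (\<Sum>j<Q. dd i j * y^j) * x^i) = 0" using z[OF y] by simp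
      qed
    qed
    have "dd i j = 0"
    proof (rule poly_zero_coeffs[where R="subfield_K m" and n=Q and a="dd i"])
      show "finite (subfield_K m :: 'a set)" by simp
      show "Q \<le> card (subfield_K m :: 'a set)" using card_K by simp
      show "j < Q" by (rule ij)
      show "\<forall>y\<in>subfield_K m. (\<Sum>j<Q. dd i j * y^j) = 0" using z2 ij by auto
    qed
    thus ?thesis unfolding dd_def by simp
  qed
qed

lemma rep_eq: "is_bivariate_rep r m (F :: 'a \<times> 'a \<Rightarrow> 'a) c \<Longrightarrow> bivariate_rep r m F = c"
  unfolding bivariate_rep_def by (rule the_equality) (auto intro: rep_unique)

lemma P2_iff:
  "(\<exists>k. 1 \<le> k \<and> k \<le> M div (Q - 1) - 1 \<and> i = (Q - 1) * k) \<longleftrightarrow> (1 \<le> i \<and> i \<le> q - 2 \<and> (Q - 1) dvd i)"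
proof
  assume "\<exists>k. 1 \<le> k \<and> k \<le> M div (Q - 1) - 1 \<and> i = (Q - 1) * k"
  then obtain k where k: "1 \<le> k" "k \<le> d - 1" "i = (Q - 1) * k" unfolding d_def by blast
  have Q1: "Q - 1 \<ge> 1" using Q8 by simp
  have h0: "1 \<le> i" using k Q1 by simp
  have h1: "i \<le> (Q-1) * (d - 1)" using k by simp
  have h2: "(Q-1) * (d - 1) = M - (Q - 1)" using Md by (simp add: diff_mult_distrib2)
  have h3: "M - (Q - 1) \<le> q - 2" using Q1 by simp
  have "i \<le> q - 2" using h1 h2 h3 by linarith
  thus "1 \<le> i \<and> i \<le> q - 2 \<and> (Q - 1) dvd i" using k h0 by auto
next
  assume a: "1 \<le> i \<and> i \<le> q - 2 \<and> (Q - 1) dvd i"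
  then obtain k where k: "i = (Q - 1) * k" by blast
  have "k \<noteq> 0" using a k by auto
  moreover have "(Q-1) * k \<le> q - 2" using a k by simp
  hence "(Q-1) * k < (Q - 1) * d" using Md q8 by linarith
  hence "k < d" using mult_less_cancel1 by blast
  ultimately show "\<exists>k. 1 \<le> k \<and> k \<le> M div (Q - 1) - 1 \<and> i = (Q - 1) * k"
    using k unfolding d_def[symmetric] by (intro exI[of _ k]) auto
qed

lemma rep_exists:
  fixes u :: int and s l :: nat
  assumes S_def: "S = {(\<gamma> * y powi u, y) | \<gamma> y. y \<in> subfield_K m \<and> y \<noteq> 0 \<and> \<gamma> \<in> Delta_set r m \<alpha> s}
             \<union> {(\<gamma>, 0) | \<gamma>. \<gamma> \<in> Delta_set r m \<alpha> l}"
    and ubar_def: "ubar = (\<lambda>i::nat. nat ((u * int i) mod (2 ^ m - 1)))"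
    and C_def: "C = (\<lambda>i j. (if 1 \<le> i \<and> i \<le> q - 2 \<and> \<not> (Q - 1) dvd i \<and> j = Q - 1 - ubar i
                     then Acoef s i else 0)
                 + (if j = Q - 1 \<and> (\<exists>k. 1 \<le> k \<and> k \<le> M div (Q - 1) - 1
                                          \<and> i = (Q - 1) * k)
                     then Acoef s i else 0)
                 + (if 1 \<le> i \<and> i \<le> q - 2 \<and> (j = 0 \<or> j = Q - 1)
                     then Acoef l i else 0))"
  shows "is_bivariate_rep r m (\<lambda>p. if p \<in> S then 1 else 0) C"
proof -
  let ?I0 = "\<lambda>i. 1 \<le> i \<and> i \<le> q - 2"
  let ?P2 = "\<lambda>i. \<exists>k. 1 \<le> k \<and> k \<le> M div (Q - 1) - 1 \<and> i = (Q - 1) * k"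
  have Q1: "Q - 1 \<ge> 7" using Q8 by simp
  have intQ: "int (Q - 1) = 2^m - 1" using Q8 by (simp add: of_nat_diff)
  have ubi: "int (ubar i) = (u * int i) mod int (Q - 1)" for i
  proof -
    have pos: "(0::int) < 2^m - 1" using intQ Q1 by linarith
    hence "0 \<le> (u * int i) mod (2^m - 1)" by simp
    thus ?thesis unfolding ubar_def intQ by simp
  qed
  have ubl: "ubar i < Q - 1" for i
  proof -
    have "Q - 1 > 0" using Q1 by linarith
    hence "int (Q - 1) > 0" by (simp only: of_nat_0_less_iff)
    hence "(u * int i) mod int (Q - 1) < int (Q - 1)" by (rule pos_mod_bound)
    thus ?thesis using ubi[of i] by linarith
  qed
  show ?thesis unfolding is_bivariate_rep_def
  proof (intro conjI allI impI)
    fix i j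
    assume asm: "q \<le> i \<or> Q \<le> j"
    have c1: "\<not> (i \<le> q - 2 \<and> j \<le> Q - 1)" using asm q8 Q8 by auto
    have f1: "\<not>(1 \<le> i \<and> i \<le> q - 2 \<and> \<not> (Q - 1) dvd i \<and> j = Q - 1 - ubar i)" using c1 by auto
    have f2: "\<not>(j = Q - 1 \<and> ?P2 i)" using c1 P2_iff[of i] by auto
    have f3: "\<not>(1 \<le> i \<and> i \<le> q - 2 \<and> (j = 0 \<or> j = Q - 1))" using c1 by auto
    show "C i j = 0" unfolding C_def by (simp only: if_not_P[OF f1] if_not_P[OF f2] if_not_P[OF f3] add_0)
  next
    fix x y :: 'a
    assume yK: "y \<in> subfield_K m"
    define G where "G i = (if ?I0 i \<and> \<not> (Q - 1) dvd i then Acoef s i * (x^i * y^(Q - 1 - ubar i)) else 0)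
       + (if ?P2 i then Acoef s i * (x^i * y^(Q-1)) else 0)
       + (if ?I0 i then Acoef l i * (x^i * y^0 + x^i * y^(Q-1)) else 0)" for i
    have inner: "(\<Sum>j<Q. C i j * x^i * y^j) = G i" for i
    proof -
      have "(\<Sum>j<Q. C i j * x^i * y^j) =
          (\<Sum>j<Q. (if ?I0 i \<and> \<not> (Q - 1) dvd i \<and> j = Q - 1 - ubar i then Acoef s i else 0) * (x^i * y^j))
        + (\<Sum>j<Q. (if j = Q - 1 \<and> ?P2 i then Acoef s i else 0) * (x^i * y^j))
        + (\<Sum>j<Q. (if ?I0 i \<and> (j = 0 \<or> j = Q - 1) then Acoef l i else 0) * (x^i * y^j))"
        unfolding C_def by (simp only: distrib_right mult.assoc sum.distrib conj_assoc)
      also have "(\<Sum>j<Q. (if ?I0 i \<and> \<not> (Q - 1) dvd i \<and> j = Q - 1 - ubar i then Acoef s i else 0) * (x^i * y^j))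
          = (if ?I0 i \<and> \<not> (Q - 1) dvd i then Acoef s i * (x^i * y^(Q - 1 - ubar i)) else 0)"
        by (rule sum_if_one) (use Q8 in auto)
      also have "(\<Sum>j<Q. (if j = Q - 1 \<and> ?P2 i then Acoef s i else 0) * (x^i * y^j))
          = (if ?P2 i then Acoef s i * (x^i * y^(Q-1)) else 0)"
        by (rule sum_if_one) (use Q8 in auto)
      also have "(\<Sum>j<Q. (if ?I0 i \<and> (j = 0 \<or> j = Q - 1) then Acoef l i else 0) * (x^i * y^j))
          = (if ?I0 i then Acoef l i * (x^i * y^0 + x^i * y^(Q-1)) else 0)"
        by (rule sum_if_two) (use Q8 in auto)
      finally show ?thesis unfolding G_def .
    qed
    have tot: "(\<Sum>i<q. \<Sum>j<Q. C i j * x^i * y^j) = (\<Sum>i<q. G i)"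
      using inner by simp
    have restr: "(\<Sum>i<q. if ?I0 i then g i else 0) = (\<Sum>i\<in>{1..q-2}. g i)" for g :: "nat \<Rightarrow> 'a"
    proof -
      have "{i \<in> {..<q}. ?I0 i} = {1..q-2}" using q8 by auto
      thus ?thesis using sum.inter_filter[of "{..<q}" g ?I0] by simp
    qed
    show "(if (x, y) \<in> S then 1 else 0) = (\<Sum>i<q. \<Sum>j<Q. C i j * x^i * y^j)"
    proof (cases "y = 0")
      case True
      have "G i = (if ?I0 i then Acoef l i * x^i else 0)" for i
      proof -
        have "Q - 1 - ubar i > 0" using ubl[of i] by simp
        hence e1: "y^(Q - 1 - ubar i) = 0" using True by simp
        have e2: "y^(Q-1) = 0" using True Q8 by simp
        show ?thesis unfolding G_def e1 e2 by simp
      qed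
      hence "(\<Sum>i<q. G i) = (\<Sum>i\<in>{1..q-2}. Acoef l i * x^i)" using restr by simp
      also have "\<dots> = (if x \<in> Delta_set r m \<alpha> l then 1 else 0)" by (rule ind_poly[symmetric])
      also have "(x \<in> Delta_set r m \<alpha> l) = ((x, y) \<in> S)" unfolding S_def using True by auto
      finally show ?thesis using tot by simp
    next
      case False
      define w where "w = y powi u"
      have w0: "w \<noteq> 0" unfolding w_def using False by (simp add: power_int_eq_0_iff)
      have yQ: "y^(Q-1) = 1" using K_nz[OF yK False] .
      have ypow: "y^(ubar i) = w^i" for i
      proof -
        have "y^(ubar i) = y ^ nat ((u * int i) mod int (Q - 1))" using ubi[of i] by (metis nat_int)
        also have "\<dots> = y powi (u * int i)" by (rule powi_mod[OF yQ, symmetric]) (use Q1 in simp)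
        also have "\<dots> = w^i" unfolding w_def by (simp add: power_int_mult)
        finally show ?thesis .
      qed
      have "G i = (if ?I0 i then Acoef s i * (x * inverse w)^i else 0)" for i
      proof (cases "?I0 i")
        case I0: True
        show ?thesis
        proof (cases "(Q - 1) dvd i")
          case True
          have "ubar i = 0"
          proof -
            have "int (Q-1) dvd u * int i" using True by (simp add: int_dvd_int_iff[symmetric])
            thus ?thesis using ubi[of i] by simp
          qed
          hence "w^i = 1" using ypow[of i] by simp
          moreover have "?P2 i" using P2_iff[of i] I0 True by simp
          moreover have "Acoef l i * (x^i * y^0 + x^i * y^(Q-1)) = 0" using yQ char2_add[OF c2, of "Acoef l i * x^i"]
            by (simp add: algebra_simps)
          ultimately show ?thesis unfolding G_def using I0 True yQ
            by (simp add: power_mult_distrib power_inverse)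
        next
          case False
          have "y^(Q - 1 - ubar i) * w^i = 1" using ypow[of i] yQ ubl[of i]
            by (metis le_add_diff_inverse2 less_imp_le power_add)
          hence e1: "y^(Q - 1 - ubar i) = inverse (w^i)" using w0 by (simp add: field_simps)
          have nP2: "\<not> ?P2 i" using P2_iff[of i] False by simp
          have z3: "Acoef l i * (x^i * y^0 + x^i * y^(Q-1)) = 0" using yQ char2_add[OF c2, of "Acoef l i * x^i"]
            by (simp add: algebra_simps)
          have c1: "?I0 i \<and> \<not> (Q - 1) dvd i" using I0 False by simp
          show ?thesis unfolding G_def if_P[OF c1] if_not_P[OF nP2] z3 e1
            using I0 by (simp add: power_mult_distrib power_inverse)
        qed
      next
        case False
        have nP2: "\<not> ?P2 i" using P2_iff[of i] False by blast
        have c1: "\<not> (?I0 i \<and> \<not> (Q - 1) dvd i)" using False by blast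
        show ?thesis unfolding G_def if_not_P[OF c1] if_not_P[OF nP2] if_not_P[OF False] by simp
      qed
      hence "(\<Sum>i<q. G i) = (\<Sum>i\<in>{1..q-2}. Acoef s i * (x * inverse w)^i)" using restr by simp
      also have "\<dots> = (if x * inverse w \<in> Delta_set r m \<alpha> s then 1 else 0)" by (rule ind_poly[symmetric])
      also have "(x * inverse w \<in> Delta_set r m \<alpha> s) = ((x, y) \<in> S)"
      proof
        assume "x * inverse w \<in> Delta_set r m \<alpha> s"
        moreover have "x = (x * inverse w) * y powi u" using w0 unfolding w_def by simp
        ultimately show "(x, y) \<in> S" unfolding S_def using yK False by blast
      next
        assume "(x, y) \<in> S"
        then obtain \<gamma> where "x = \<gamma> * w" "\<gamma> \<in> Delta_set r m \<alpha> s"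
          unfolding S_def w_def using False by auto
        thus "x * inverse w \<in> Delta_set r m \<alpha> s" using w0 by (simp add: field_simps)
      qed
      finally show ?thesis using tot by simp
    qed
  qed
qed

lemma sum_Delta: "(\<Sum>\<gamma>\<in>Delta_set r m \<alpha> k. \<gamma>) = \<alpha>^k * (\<Sum>t<N. \<alpha>^t)"
proof -
  have "(\<Sum>\<gamma>\<in>Delta_set r m \<alpha> k. \<gamma>) = (\<Sum>t\<in>{k..<k+N}. \<alpha>^t)"
    unfolding Delta_eq by (rule sum.reindex[OF Delta_inj, unfolded comp_def])
  also have "\<dots> = (\<Sum>t<N. \<alpha>^(k+t))" by (rule sum_shift)
  also have "\<dots> = \<alpha>^k * (\<Sum>t<N. \<alpha>^t)" by (simp add: power_add sum_distrib_left)
  finally show ?thesis .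
qed

lemma sum_Delta_nz: "(\<Sum>\<gamma>\<in>Delta_set r m \<alpha> k. \<gamma>) \<noteq> 0"
proof -
  have "\<alpha>^N \<noteq> 1"
  proof
    assume "\<alpha>^N = 1"
    hence "M dvd N" using ord by simp
    moreover have "N < M"
    proof -
      have N2: "N \<ge> 2" using power_increasing[of 1 "r*m-1" "2::nat"] rm3 by simp
      thus ?thesis using qN by linarith
    qed
    ultimately show False using N0 nat_dvd_not_less by blast
  qed
  hence "1 - \<alpha>^N \<noteq> 0" by simp
  hence "(1 - \<alpha>) * (\<Sum>t<N. \<alpha>^t) \<noteq> 0" by (metis one_diff_power_eq)
  hence "(\<Sum>t<N. \<alpha>^t) \<noteq> 0" by auto
  thus ?thesis unfolding sum_Delta using a0 by simp
qed

lemma sum_Kstar_powi: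
  fixes u :: int
  assumes cop: "coprime u (2 ^ m - 1)"
  shows "(\<Sum>y\<in>subfield_K m - {0::'a}. y powi u) = 0"
proof -
  define \<rho> where "\<rho> = \<beta> powi u"
  have Q1: "Q - 1 > 0" using Q8 by simp
  have bQ: "\<beta>^(Q-1) = 1" using beta_ord by simp
  have iQ: "int (Q - 1) > 0" using Q1 by (simp only: of_nat_0_less_iff)
  have "(\<Sum>y\<in>subfield_K m - {0}. y powi u) = (\<Sum>k<Q-1. (\<beta>^k) powi u)"
    unfolding Kstar by (rule sum.reindex[OF beta_inj, unfolded comp_def])
  also have "\<dots> = (\<Sum>k<Q-1. \<rho>^k)"
  proof (rule sum.cong[OF refl])
    fix k
    have "(\<beta>^k) powi u = (\<beta> powi int k) powi u" by simp
    also have "\<dots> = \<beta> powi (int k * u)" by (simp only: power_int_mult)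
    also have "\<dots> = \<beta> powi (u * int k)" by (simp only: mult.commute)
    also have "\<dots> = (\<beta> powi u) powi int k" by (simp only: power_int_mult)
    also have "\<dots> = \<rho>^k" unfolding \<rho>_def by simp
    finally show "(\<beta>^k) powi u = \<rho>^k" .
  qed
  also have "\<dots> = 0"
  proof -
    define e where "e = nat (u mod int (Q-1))"
    have re: "\<rho> = \<beta>^e" unfolding \<rho>_def e_def by (rule powi_mod[OF bQ Q1])
    have "\<rho>^(Q-1) = (\<beta>^(Q-1))^e" unfolding re by (simp add: power_mult[symmetric] mult.commute)
    hence r1: "\<rho>^(Q-1) = 1" using bQ by simp
    have "\<rho> \<noteq> 1"
    proof
      assume "\<rho> = 1"
      hence "(Q-1) dvd e" using beta_ord re by simp
      moreover have "e < Q - 1"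
      proof -
        have "u mod int (Q-1) < int (Q-1)" by (rule pos_mod_bound[OF iQ])
        moreover have "u mod int (Q-1) \<ge> 0" by (rule pos_mod_sign[OF iQ])
        ultimately show ?thesis unfolding e_def by linarith
      qed
      ultimately have "e = 0" using nat_dvd_not_less by blast
      moreover have "u mod int (Q-1) \<ge> 0" by (rule pos_mod_sign[OF iQ])
      ultimately have "u mod int (Q-1) = 0" unfolding e_def by linarith
      hence dv: "int (Q-1) dvd u" by (simp add: mod_eq_0_iff_dvd)
      have intQ: "int (Q - 1) = 2^m - 1" using Q8 by (simp add: of_nat_diff)
      have "\<bar>int (Q-1)\<bar> = 1" using coprime_common_divisor_int[OF cop dv] intQ by simp
      hence "Q - 1 = 1" by linarith
      thus False using Q8 by linarith
    qed
    have "(1 - \<rho>) * (\<Sum>k<Q-1. \<rho>^k) = 1 - \<rho>^(Q-1)" by (rule one_diff_power_eq[symmetric])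
    also have "\<dots> = 0" using r1 by simp
    finally show ?thesis using \<open>\<rho> \<noteq> 1\<close> by simp
  qed
  finally show ?thesis .
qed

lemma deg:
  fixes u :: int and s l :: nat and b :: "nat \<Rightarrow> 'a \<times> 'a"
  assumes S_def: "S = {(\<gamma> * y powi u, y) | \<gamma> y. y \<in> subfield_K m \<and> y \<noteq> 0 \<and> \<gamma> \<in> Delta_set r m \<alpha> s}
             \<union> {(\<gamma>, 0) | \<gamma>. \<gamma> \<in> Delta_set r m \<alpha> l}"
    and cop: "coprime u (2 ^ m - 1)"
    and bas: "is_F2_basis ((r + 1) * m) (UNIV \<times> subfield_K m) b"
  shows "alg_degree ((r + 1) * m) b (\<lambda>p. p \<in> S) = (r + 1) * m - 1"
proof -
  define n where "n = (r+1)*m"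
  let ?D = "Delta_set r m \<alpha> s \<times> (subfield_K m - {0::'a})"
  let ?f = "\<lambda>(\<gamma>, y). (\<gamma> * y powi u, y)"
  define S1 where "S1 = ?f ` ?D"
  define S2 where "S2 = (\<lambda>\<gamma>. (\<gamma>, 0::'a)) ` Delta_set r m \<alpha> l"
  have SS: "S = S1 \<union> S2"
  proof
    show "S \<subseteq> S1 \<union> S2"
    proof
      fix p assume "p \<in> S"
      then consider (a) \<gamma> y where "p = (\<gamma> * y powi u, y)" "y \<in> subfield_K m" "y \<noteq> 0" "\<gamma> \<in> Delta_set r m \<alpha> s"
        | (b) \<gamma> where "p = (\<gamma>, 0)" "\<gamma> \<in> Delta_set r m \<alpha> l" unfolding S_def by blast
      thus "p \<in> S1 \<union> S2"
      proof cases
        case a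
        hence "p = ?f (\<gamma>, y)" "(\<gamma>, y) \<in> ?D" by auto
        thus ?thesis unfolding S1_def by blast
      next
        case b thus ?thesis unfolding S2_def by blast
      qed
    qed
  next
    show "S1 \<union> S2 \<subseteq> S" unfolding S_def S1_def S2_def by auto
  qed
  have disj: "S1 \<inter> S2 = {}" unfolding S1_def S2_def by auto
  have inj1: "inj_on ?f ?D"
  proof (rule inj_onI)
    fix x1 x2 assume x: "x1 \<in> ?D" "x2 \<in> ?D" "?f x1 = ?f x2"
    obtain g1 y1 where 1: "x1 = (g1, y1)" by (cases x1)
    obtain g2 y2 where 2: "x2 = (g2, y2)" by (cases x2)
    have "y1 = y2" "g1 * y1 powi u = g2 * y2 powi u" using x 1 2 by auto
    moreover have "y1 powi u \<noteq> 0" using x 1 by auto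
    ultimately show "x1 = x2" using 1 2 by auto
  qed
  have inj2: "inj_on (\<lambda>\<gamma>. (\<gamma>, 0::'a)) X" for X by (auto simp: inj_on_def)
  have finS: "finite S1" "finite S2" by auto
  have sig: "(\<Sum>p\<in>S. fst p) \<noteq> 0"
  proof -
    have "(\<Sum>p\<in>S1. fst p) = (\<Sum>x\<in>?D. fst (?f x))"
      unfolding S1_def by (rule sum.reindex[OF inj1, unfolded comp_def])
    also have "\<dots> = (\<Sum>x\<in>?D. fst x * snd x powi u)" by (rule sum.cong) auto
    also have "\<dots> = (\<Sum>\<gamma>\<in>Delta_set r m \<alpha> s. \<Sum>y\<in>subfield_K m - {0}. \<gamma> * y powi u)"
      by (subst sum.cartesian_product) (simp add: case_prod_beta')
    also have "\<dots> = (\<Sum>\<gamma>\<in>Delta_set r m \<alpha> s. \<gamma>) * (\<Sum>y\<in>subfield_K m - {0::'a}. y powi u)"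
      by (rule sum_product[symmetric])
    also have "\<dots> = 0" using sum_Kstar_powi[OF cop] by simp
    finally have s1: "(\<Sum>p\<in>S1. fst p) = 0" .
    have "(\<Sum>p\<in>S2. fst p) = (\<Sum>\<gamma>\<in>Delta_set r m \<alpha> l. \<gamma>)"
      unfolding S2_def by (subst sum.reindex[OF inj2]) auto
    hence s2: "(\<Sum>p\<in>S2. fst p) \<noteq> 0" using sum_Delta_nz by simp
    have "(\<Sum>p\<in>S. fst p) = (\<Sum>p\<in>S1. fst p) + (\<Sum>p\<in>S2. fst p)"
      unfolding SS by (rule sum.union_disjoint[OF finS disj])
    thus ?thesis using s1 s2 by simp
  qed
  have cS: "even (card S)"
  proof -
    have "card S1 = card ?D" unfolding S1_def by (rule card_image[OF inj1])
    also have "\<dots> = N * (Q - 1)" by (simp add: card_cartesian_product card_Delta card_Kstar)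
    finally have c1: "card S1 = N * (Q - 1)" .
    have c2': "card S2 = N" unfolding S2_def using card_image[OF inj2[of "Delta_set r m \<alpha> l"]] card_Delta by simp
    have "card S = card S1 + card S2" unfolding SS by (rule card_Un_disjoint[OF finS disj])
    thus ?thesis using c1 c2' N_even by simp
  qed
  define co where "co = F2_coords b"
  have bij: "bij_betw co (Pow {..<n}) (UNIV \<times> subfield_K m)"
    using bas unfolding is_F2_basis_def co_def n_def .
  have Ssub: "S \<subseteq> UNIV \<times> subfield_K m" unfolding S_def using zero_K by auto
  define TT where "TT = {T \<in> Pow {..<n}. co T \<in> S}"
  have bijT: "bij_betw co TT S"
  proof -
    have "inj_on co TT" by (rule inj_on_subset[OF bij_betw_imp_inj_on[OF bij]]) (auto simp: TT_def)
    moreover have "co ` TT = S"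
    proof
      show "co ` TT \<subseteq> S" unfolding TT_def by auto
      show "S \<subseteq> co ` TT"
      proof
        fix p assume p: "p \<in> S"
        hence "p \<in> co ` Pow {..<n}" using Ssub bij_betw_imp_surj_on[OF bij] by auto
        then obtain T where "T \<in> Pow {..<n}" "p = co T" by auto
        thus "p \<in> co ` TT" unfolding TT_def using p by auto
      qed
    qed
    ultimately show ?thesis unfolding bij_betw_def by simp
  qed
  have finTT: "finite TT" unfolding TT_def by simp
  have cTT: "card TT = card S" by (rule bij_betw_same_card[OF bijT])
  have anf_iff: "anf_coeff b (\<lambda>p. p \<in> S) X \<longleftrightarrow> odd (card {T \<in> TT. T \<subseteq> X})" if X: "X \<subseteq> {..<n}" for X
  proof -
    have "{T. T \<subseteq> X \<and> F2_coords b T \<in> S} = {T \<in> TT. T \<subseteq> X}" unfolding TT_def co_def using X by auto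
    thus ?thesis unfolding anf_coeff_def by simp
  qed
  have "\<exists>j<n. odd (card {T \<in> TT. j \<in> T})"
  proof (rule ccontr)
    assume "\<not> (\<exists>j<n. odd (card {T \<in> TT. j \<in> T}))"
    hence ev: "\<And>j. j < n \<Longrightarrow> even (card {T \<in> TT. j \<in> T})" by auto
    have "(\<Sum>p\<in>S. fst p) = (\<Sum>T\<in>TT. fst (co T))" by (rule sum.reindex_bij_betw[OF bijT, symmetric])
    also have "\<dots> = (\<Sum>T\<in>TT. \<Sum>t<n. if t \<in> T then fst (b t) else 0)"
    proof (rule sum.cong[OF refl])
      fix T assume T: "T \<in> TT"
      hence Tn: "T \<subseteq> {..<n}" unfolding TT_def by auto
      have "fst (co T) = (\<Sum>t\<in>T. fst (b t))" unfolding co_def F2_coords_def by simp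
      also have "\<dots> = (\<Sum>t\<in>{t \<in> {..<n}. t \<in> T}. fst (b t))"
        using Tn by (intro sum.cong) auto
      also have "\<dots> = (\<Sum>t<n. if t \<in> T then fst (b t) else 0)"
        by (rule sum.inter_filter) simp
      finally show "fst (co T) = (\<Sum>t<n. if t \<in> T then fst (b t) else 0)" .
    qed
    also have "\<dots> = (\<Sum>t<n. \<Sum>T\<in>TT. if t \<in> T then fst (b t) else 0)" by (rule sum.swap)
    also have "\<dots> = (\<Sum>t<n. of_nat (card {T \<in> TT. t \<in> T}) * fst (b t))"
    proof (rule sum.cong[OF refl])
      fix t
      have "(\<Sum>T\<in>TT. if t \<in> T then fst (b t) else 0) = (\<Sum>T\<in>{T \<in> TT. t \<in> T}. fst (b t))"
        by (rule sum.inter_filter[symmetric]) (rule finTT)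
      also have "\<dots> = of_nat (card {T \<in> TT. t \<in> T}) * fst (b t)" by simp
      finally show "(\<Sum>T\<in>TT. if t \<in> T then fst (b t) else 0) = of_nat (card {T \<in> TT. t \<in> T}) * fst (b t)" .
    qed
    also have "\<dots> = 0"
    proof (rule sum.neutral, rule ballI)
      fix t assume "t \<in> {..<n}"
      hence "(of_nat (card {T \<in> TT. t \<in> T}) :: 'a) = 0" using ev char2_even[OF c2] by simp
      thus "of_nat (card {T \<in> TT. t \<in> T}) * fst (b t) = 0" by simp
    qed
    finally show False using sig by simp
  qed
  then obtain j where j: "j < n" "odd (card {T \<in> TT. j \<in> T})" by blast
  define X where "X = {..<n} - {j}"
  have cX: "card X = n - 1" unfolding X_def using j by simp
  have Xsub: "X \<subseteq> {..<n}" unfolding X_def by auto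
  have eqX: "{T \<in> TT. T \<subseteq> X} = {T \<in> TT. j \<notin> T}" unfolding X_def TT_def by auto
  have "card TT = card {T \<in> TT. j \<in> T} + card {T \<in> TT. j \<notin> T}"
  proof -
    have "TT = {T \<in> TT. j \<in> T} \<union> {T \<in> TT. j \<notin> T}" by auto
    hence "card TT = card ({T \<in> TT. j \<in> T} \<union> {T \<in> TT. j \<notin> T})" by simp
    also have "\<dots> = card {T \<in> TT. j \<in> T} + card {T \<in> TT. j \<notin> T}"
      by (rule card_Un_disjoint) (use finTT in auto)
    finally show ?thesis .
  qed
  hence "odd (card {T \<in> TT. j \<notin> T})" using j cTT cS by simp
  hence anfX: "anf_coeff b (\<lambda>p. p \<in> S) X" using anf_iff[OF Xsub] eqX by simp
  have notfull: "\<not> anf_coeff b (\<lambda>p. p \<in> S) {..<n}"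
  proof -
    have "{T \<in> TT. T \<subseteq> {..<n}} = TT" unfolding TT_def by auto
    thus ?thesis using anf_iff[of "{..<n}"] cTT cS by simp
  qed
  let ?Z = "{card S' | S'. S' \<subseteq> {..<n} \<and> anf_coeff b (\<lambda>p. p \<in> S) S'}"
  have Zle: "z \<le> n - 1" if "z \<in> ?Z" for z
  proof -
    obtain S' where S': "z = card S'" "S' \<subseteq> {..<n}" "anf_coeff b (\<lambda>p. p \<in> S) S'" using \<open>z \<in> ?Z\<close> by blast
    have "card S' \<le> n" using card_mono[OF _ S'(2)] by simp
    moreover have "card S' \<noteq> n"
    proof
      assume "card S' = n"
      hence "S' = {..<n}" using card_subset_eq[OF _ S'(2)] by simp
      thus False using S'(3) notfull by simp
    qed
    ultimately show ?thesis using S'(1) by simp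
  qed
  have "Max (insert 0 ?Z) = n - 1"
  proof (rule Max_eqI)
    have "?Z \<subseteq> {..n-1}" using Zle by auto
    thus "finite (insert 0 ?Z)" by (simp add: finite_subset)
    show "\<And>y. y \<in> insert 0 ?Z \<Longrightarrow> y \<le> n - 1" using Zle by auto
    show "n - 1 \<in> insert 0 ?Z" by (rule insertI2, rule CollectI, rule exI[of _ X]) (use cX Xsub anfX in auto)
  qed
  thus ?thesis unfolding alg_degree_def n_def .
qed

end

theorem theorem4:
  fixes r m s l :: nat and u :: int and \<alpha> :: "'a::{field,finite}"
  assumes "odd r" and "r \<ge> 1" and "m \<ge> 3"
    and "card (UNIV :: 'a set) = 2 ^ (r * m)"
    and "coprime u (2 ^ m - 1)"
    and "\<forall>x::'a. x \<noteq> 0 \<longrightarrow> (\<exists>i::nat. x = \<alpha> ^ i)"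
    and "s \<le> 2 ^ (r * m) - 2" and "l \<le> 2 ^ (r * m) - 2"
  defines "S \<equiv> {(\<gamma> * y powi u, y) | \<gamma> y. y \<in> subfield_K m \<and> y \<noteq> 0 \<and> \<gamma> \<in> Delta_set r m \<alpha> s}
             \<union> {(\<gamma>, 0) | \<gamma>. \<gamma> \<in> Delta_set r m \<alpha> l}"
    and "A \<equiv> \<lambda>t::nat. \<lambda>i::nat. (inverse \<alpha>) ^ (i * t) * (1 + (inverse \<alpha>) ^ i) ^ (2 ^ (r * m - 1) - 1)"
    and "ubar \<equiv> \<lambda>i::nat. nat ((u * int i) mod (2 ^ m - 1))"
  shows "bivariate_rep r m (\<lambda>p. if p \<in> S then 1 else 0) =
           (\<lambda>i j. (if 1 \<le> i \<and> i \<le> 2 ^ (r * m) - 2 \<and> \<not> (2 ^ m - 1) dvd i \<and> j = 2 ^ m - 1 - ubar i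
                     then A s i else 0)
                 + (if j = 2 ^ m - 1 \<and> (\<exists>k. 1 \<le> k \<and> k \<le> (2 ^ (r * m) - 1) div (2 ^ m - 1) - 1
                                          \<and> i = (2 ^ m - 1) * k)
                     then A s i else 0)
                 + (if 1 \<le> i \<and> i \<le> 2 ^ (r * m) - 2 \<and> (j = 0 \<or> j = 2 ^ m - 1)
                     then A l i else 0))
         \<and> (\<forall>b. is_F2_basis ((r + 1) * m) (UNIV \<times> subfield_K m) b \<longrightarrow>
                alg_degree ((r + 1) * m) b (\<lambda>p. p \<in> S) = (r + 1) * m - 1)"
proof -
  interpret fsetup r m \<alpha> using assms(2,3,4,6) by unfold_locales auto
  have AA: "A = Acoef" unfolding A_def by (intro ext) (simp add: Acoef_def)
  have S': "S = {(\<gamma> * y powi u, y) | \<gamma> y. y \<in> subfield_K m \<and> y \<noteq> 0 \<and> \<gamma> \<in> Delta_set r m \<alpha> s}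
             \<union> {(\<gamma>, 0) | \<gamma>. \<gamma> \<in> Delta_set r m \<alpha> l}" unfolding S_def ..
  have U': "ubar = (\<lambda>i::nat. nat ((u * int i) mod (2 ^ m - 1)))" unfolding ubar_def ..
  show ?thesis unfolding AA
    apply (intro conjI allI impI)
     apply (rule rep_eq, rule rep_exists[OF S' U' refl])
    apply (erule deg[OF S' assms(5)])
    done
qed

end
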